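(* Let $G=(V,E,\gamma,c)$ be a typed DAG task executed on a platform with $M_s\ge1$ cores of each type $s\in S$ under any work-conserving scheduling algorithm, and let $R(G)$ be its worst-case response time. Let $\hat G$ be the scaled graph of $G$. Then \[ R(G)\le len(\hat G)+\sum_{s\in S}\frac{vol_s(G)}{M_s}. \]
   Context: A typed DAG task is $G=(V,E,\gamma,c)$ where $(V,E)$ is a finite directed acyclic graph with a unique source vertex $v_{src}$ and a unique sink vertex $v_{snk}$, $S$ is a finite set of core types, $\gamma:V\to S$ gives the type of each vertex, and $c:V\to\mathbb{R}_{\ge0}$ gives the worst-case execution time (WCET) of each vertex. The platform has, for each $s\in S$, $M_s\ge 1$ cores of type $s$. $vol_s(G)=\sum_{u\in V,\gamma(u)=s}c(u)$. For a path $\pi$, $len(\pi)=\sum_{u\in\pi}c(u)$, and $len(G)$ is the maximum of $len(\pi)$ over paths of $G$. The scaled graph $\hat G=(V,E,\gamma,\hat c)$ has the same vertices, edges and types as $G$, with weights $\hat c(v)=c(v)\,(1-1/M_{\gamma(v)})$; $len(\hat G)$ is the longest path length of $\hat G$ with respect to $\hat c$. Runtime model: a vertex becomes eligible when all its predecessors have finished (the source is eligible at time $0$); a vertex $v$ may only execute on cores of type $\gamma(v)$, one core at a time, for a total execution time of at most $c(v)$ (possibly less). Scheduling is work-conserving: an eligible unfinished vertex of type $s$ must be executing whenever some core of type $s$ is available. The response time of an execution sequence is the finish time of $v_{snk}$; the worst-case response time $R(G)$ is the maximum (supremum) of response times over all possible execution sequences. *)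

theory Defs
  imports "HOL-Analysis.Analysis"
begin

definition typed_dag :: "'v set \<Rightarrow> ('v \<times> 'v) set \<Rightarrow> 'v \<Rightarrow> 'v \<Rightarrow> bool" where
  "typed_dag V E src snk \<longleftrightarrow>
     finite V \<and> E \<subseteq> V \<times> V \<and> acyclic E \<and>
     src \<in> V \<and> snk \<in> V \<and>
     (\<forall>v\<in>V. (\<forall>u. (u, v) \<notin> E) \<longleftrightarrow> v = src) \<and>
     (\<forall>v\<in>V. (\<forall>w. (v, w) \<notin> E) \<longleftrightarrow> v = snk)"

definition is_path :: "'v set \<Rightarrow> ('v \<times> 'v) set \<Rightarrow> 'v list \<Rightarrow> bool" where
  "is_path V E p \<longleftrightarrow> p \<noteq> [] \<and> set p \<subseteq> V \<and>
     (\<forall>i. Suc i < length p \<longrightarrow> (p ! i, p ! Suc i) \<in> E)"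

definition path_len :: "('v \<Rightarrow> real) \<Rightarrow> 'v list \<Rightarrow> real" where
  "path_len w p = (\<Sum>u\<leftarrow>p. w u)"

definition graph_len :: "'v set \<Rightarrow> ('v \<times> 'v) set \<Rightarrow> ('v \<Rightarrow> real) \<Rightarrow> real" where
  "graph_len V E w = Sup (path_len w ` {p. is_path V E p})"

definition vol :: "'v set \<Rightarrow> ('v \<Rightarrow> 's) \<Rightarrow> ('v \<Rightarrow> real) \<Rightarrow> 's \<Rightarrow> real" where
  "vol V \<gamma> c s = (\<Sum>v\<in>{u\<in>V. \<gamma> u = s}. c v)"

definition scaled_wcet :: "('v \<Rightarrow> 's) \<Rightarrow> ('v \<Rightarrow> real) \<Rightarrow> ('s \<Rightarrow> nat) \<Rightarrow> 'v \<Rightarrow> real" where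
  "scaled_wcet \<gamma> c M v = c v * (1 - 1 / real (M (\<gamma> v)))"

(* Execution sequence: exec t v  <-> vertex v is executing (on some core of its type) at time t;
   fin v = finish time of v. *)
definition eligible :: "('v \<times> 'v) set \<Rightarrow> ('v \<Rightarrow> real) \<Rightarrow> real \<Rightarrow> 'v \<Rightarrow> bool" where
  "eligible E fin t v \<longleftrightarrow> (\<forall>u. (u, v) \<in> E \<longrightarrow> fin u \<le> t)"

definition valid_execution ::
  "'v set \<Rightarrow> ('v \<times> 'v) set \<Rightarrow> ('v \<Rightarrow> 's) \<Rightarrow> ('v \<Rightarrow> real) \<Rightarrow> ('s \<Rightarrow> nat)
   \<Rightarrow> (real \<Rightarrow> 'v \<Rightarrow> bool) \<Rightarrow> ('v \<Rightarrow> real) \<Rightarrow> bool" where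
  "valid_execution V E \<gamma> c M exec fin \<longleftrightarrow>
     \<comment> \<open>finishing respects precedence and times are nonnegative\<close>
     (\<forall>v\<in>V. 0 \<le> fin v \<and> eligible E fin (fin v) v) \<and>
     \<comment> \<open>a vertex executes only while eligible and unfinished, at times \<ge> 0\<close>
     (\<forall>t v. exec t v \<longrightarrow> v \<in> V \<and> 0 \<le> t \<and> eligible E fin t v \<and> t < fin v) \<and>
     \<comment> \<open>total execution time of v is (measurable and) at most c v\<close>
     (\<forall>v\<in>V. {t. exec t v} \<in> sets lborel \<and> emeasure lborel {t. exec t v} \<le> ennreal (c v)) \<and>
     \<comment> \<open>at most M s vertices of type s execute simultaneously (one core each)\<close>
     (\<forall>t s. card {v\<in>V. \<gamma> v = s \<and> exec t v} \<le> M s) \<and>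
     \<comment> \<open>work conservation\<close>
     (\<forall>t v. v \<in> V \<and> 0 \<le> t \<and> eligible E fin t v \<and> t < fin v \<and>
            card {u\<in>V. \<gamma> u = \<gamma> v \<and> exec t u} < M (\<gamma> v) \<longrightarrow> exec t v)"

definition wcrt ::
  "'v set \<Rightarrow> ('v \<times> 'v) set \<Rightarrow> ('v \<Rightarrow> 's) \<Rightarrow> ('v \<Rightarrow> real) \<Rightarrow> ('s \<Rightarrow> nat) \<Rightarrow> 'v \<Rightarrow> ereal" where
  "wcrt V E \<gamma> c M snk =
     (SUP ef \<in> {(exec, fin). valid_execution V E \<gamma> c M exec fin}. ereal (snd ef snk))"

end

theory Submission
  imports Defs
begin


lemma path_trancl:
  assumes "is_path V E p" "i < j" "j < length p"
  shows "(p ! i, p ! j) \<in> E\<^sup>+"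
  using assms(2,3)
proof (induction j)
  case 0 then show ?case by simp
next
  case (Suc j)
  have e: "(p ! j, p ! Suc j) \<in> E" using assms(1) Suc.prems unfolding is_path_def by blast
  show ?case
  proof (cases "i = j")
    case True then show ?thesis using e by auto
  next
    case False
    then have "(p ! i, p ! j) \<in> E\<^sup>+" using Suc by auto
    then show ?thesis using e by (meson trancl.trancl_into_trancl)
  qed
qed

lemma path_distinct:
  assumes "is_path V E p" "acyclic E"
  shows "distinct p"
proof -
  have "\<not> (i < j \<and> j < length p \<and> p ! i = p ! j)" for i j
    using path_trancl[OF assms(1), of i j] assms(2) unfolding acyclic_def by auto
  then show ?thesis unfolding distinct_conv_nth by (metis linorder_neqE_nat)
qed

lemma path_len_le:
  assumes "is_path V E p" "acyclic E" "finite V" "\<forall>v\<in>V. 0 \<le> w v"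
  shows "path_len w p \<le> (\<Sum>v\<in>V. w v)"
proof -
  have "path_len w p = (\<Sum>v\<in>set p. w v)"
    unfolding path_len_def using path_distinct[OF assms(1,2)] by (simp add: sum_list_distinct_conv_sum_set)
  also have "\<dots> \<le> (\<Sum>v\<in>V. w v)"
    using assms unfolding is_path_def by (intro sum_mono2) auto
  finally show ?thesis .
qed

lemma path_le_graph_len:
  assumes "is_path V E p" "acyclic E" "finite V" "\<forall>v\<in>V. 0 \<le> w v"
  shows "path_len w p \<le> graph_len V E w"
  unfolding graph_len_def
  apply (rule cSup_upper)
  using assms apply blast
  unfolding bdd_above_def using path_len_le[OF _ assms(2-4)] by blast

lemma path_cover:
  assumes "finite E" "acyclic E" "E \<subseteq> V \<times> V" "\<forall>v\<in>V. eligible E fin (fin v) v"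
  shows "v \<in> V \<Longrightarrow> \<exists>p. is_path V E p \<and> last p = v \<and>
     (\<forall>t. 0 \<le> t \<and> t < fin v \<longrightarrow> (\<exists>u\<in>set p. eligible E fin t u \<and> t < fin u))"
proof (induction v rule: wf_induct_rule[OF finite_acyclic_wf[OF assms(1,2)]])
  case (1 v)
  define Pr where "Pr = {u. (u, v) \<in> E}"
  have finPr: "finite Pr" unfolding Pr_def
    using finite_imageI[OF assms(1), of fst] by (rule finite_subset[rotated]) force
  show ?case
  proof (cases "Pr = {}")
    case True
    then have "eligible E fin t v" for t unfolding eligible_def Pr_def by auto
    then show ?thesis using 1(2) by (intro exI[of _ "[v]"]) (auto simp: is_path_def)
  next
    case False
    have mi: "Max (fin ` Pr) \<in> fin ` Pr" using finPr False by (intro Max_in) auto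
    then obtain u where uP: "u \<in> Pr" and uM: "fin u = Max (fin ` Pr)" by (auto simp del: Max_in)
    have umax: "\<forall>w\<in>Pr. fin w \<le> fin u" unfolding uM using finPr by simp
    have uV: "u \<in> V" using uP assms(3) unfolding Pr_def by auto
    obtain p where p: "is_path V E p" "last p = u"
      "\<forall>t. 0 \<le> t \<and> t < fin u \<longrightarrow> (\<exists>u\<in>set p. eligible E fin t u \<and> t < fin u)"
      using 1(1)[of u] uP uV unfolding Pr_def by auto
    have pne: "p \<noteq> []" using p(1) unfolding is_path_def by auto
    have "is_path V E (p @ [v])"
      unfolding is_path_def
    proof (intro conjI allI impI)
      show "set (p @ [v]) \<subseteq> V" using p(1) 1(2) unfolding is_path_def by auto
    next
      fix i assume i: "Suc i < length (p @ [v])"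
      show "((p @ [v]) ! i, (p @ [v]) ! Suc i) \<in> E"
      proof (cases "Suc i < length p")
        case True then show ?thesis using p(1) unfolding is_path_def by (simp add: nth_append)
      next
        case False
        then have "Suc i = length p" using i by simp
        then have "p ! i = u" using p(2) pne by (metis diff_Suc_1 last_conv_nth)
        then show ?thesis using \<open>Suc i = length p\<close> uP unfolding Pr_def
          by (simp add: nth_append)
      qed
    qed simp
    moreover have "\<exists>w\<in>set (p @ [v]). eligible E fin t w \<and> t < fin w"
      if "0 \<le> t" "t < fin v" for t
    proof (cases "t < fin u")
      case True then show ?thesis using p(3) that by auto
    next
      case False
      then have "eligible E fin t v" using umax unfolding eligible_def Pr_def by force
      then show ?thesis using that by auto
    qed
    ultimately show ?thesis by (intro exI[of _ "p @ [v]"]) auto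
  qed
qed



lemma main_bound:
  fixes V :: "'v set" and E :: "('v \<times> 'v) set" and src snk :: 'v
    and S :: "'s set" and \<gamma> :: "'v \<Rightarrow> 's" and c :: "'v \<Rightarrow> real" and M :: "'s \<Rightarrow> nat"
  assumes dag: "typed_dag V E src snk"
    and "finite S" and "\<gamma> ` V \<subseteq> S"
    and "\<forall>v\<in>V. 0 \<le> c v"
    and "\<forall>s\<in>S. 1 \<le> M s"
    and ve: "valid_execution V E \<gamma> c M exec fin"
  shows "fin snk \<le> graph_len V E (scaled_wcet \<gamma> c M) + (\<Sum>s\<in>S. vol V \<gamma> c s / real (M s))"
proof -
  have finV: "finite V" and EV: "E \<subseteq> V \<times> V" and acyc: "acyclic E" and snkV: "snk \<in> V"
    using dag unfolding typed_dag_def by auto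
  have finE: "finite E" using finV EV by (meson finite_SigmaI finite_subset)
  define X where "X v = {t. exec t v}" for v
  define a where "a u = 1 - 1 / real (M (\<gamma> u))" for u
  have Mpos: "1 \<le> M (\<gamma> v)" if "v \<in> V" for v using assms(3,5) that by auto
  have a0: "0 \<le> a u" if "u \<in> V" for u using Mpos[OF that] unfolding a_def by (simp add: field_simps)
  note vp = ve[unfolded valid_execution_def]
  have fin0: "\<forall>v\<in>V. 0 \<le> fin v" and elig: "\<forall>v\<in>V. eligible E fin (fin v) v"
    using vp[THEN conjunct1] by auto
  have ex: "\<And>t v. exec t v \<Longrightarrow> v \<in> V \<and> 0 \<le> t \<and> eligible E fin t v \<and> t < fin v"
    using vp[THEN conjunct2, THEN conjunct1] by blast
  have Xm: "\<And>v. v \<in> V \<Longrightarrow> X v \<in> sets lborel"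
    and Xe: "\<And>v. v \<in> V \<Longrightarrow> emeasure lborel (X v) \<le> ennreal (c v)"
    using vp[THEN conjunct2, THEN conjunct2, THEN conjunct1] unfolding X_def by blast+
  have cardM: "\<And>t s. card {v\<in>V. \<gamma> v = s \<and> exec t v} \<le> M s"
    using vp[THEN conjunct2, THEN conjunct2, THEN conjunct2, THEN conjunct1] by blast
  have wc: "\<And>t v. v \<in> V \<Longrightarrow> 0 \<le> t \<Longrightarrow> eligible E fin t v \<Longrightarrow> t < fin v \<Longrightarrow>
            card {u\<in>V. \<gamma> u = \<gamma> v \<and> exec t u} < M (\<gamma> v) \<Longrightarrow> exec t v"
    using vp[THEN conjunct2, THEN conjunct2, THEN conjunct2, THEN conjunct2] by blast
  have Xfin: "emeasure lborel (X v) < top" if "v \<in> V" for v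
    using le_less_trans[OF Xe[OF that] ennreal_less_top] .
  have Xint: "integrable lborel (indicator (X v) :: real \<Rightarrow> real)" if "v \<in> V" for v
    using Xm[OF that] Xfin[OF that] by (intro integrable_real_indicator) (auto simp: top_unique less_top)
  have Xmeas: "measure lborel (X v) \<le> c v" if "v \<in> V" for v
  proof -
    have "measure lborel (X v) \<le> enn2real (ennreal (c v))"
      unfolding measure_def by (rule enn2real_mono[OF Xe[OF that] ennreal_less_top])
    then show ?thesis using assms(4) that by simp
  qed
  obtain p where p: "is_path V E p"
    and cov: "\<forall>t. 0 \<le> t \<and> t < fin snk \<longrightarrow> (\<exists>u\<in>set p. eligible E fin t u \<and> t < fin u)"
    using path_cover[OF finE acyc EV elig snkV] by auto
  have pV: "set p \<subseteq> V" using p unfolding is_path_def by auto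
  define F where "F t = (\<Sum>u\<in>set p. a u * indicator (X u) t) +
      (\<Sum>s\<in>S. (\<Sum>v\<in>{v\<in>V. \<gamma> v = s}. indicator (X v) t) / real (M s))" for t :: real
  have Fint: "integrable lborel F"
    unfolding F_def using pV finV Xint
    by (intro Bochner_Integration.integrable_add Bochner_Integration.integrable_sum integrable_divide_zero integrable_mult_right) auto
  have T0: "0 \<le> fin snk" using fin0 snkV by auto
  have pw: "indicator {0..<fin snk} t \<le> F t" for t
  proof -
    have nn1: "0 \<le> (\<Sum>u\<in>set p. a u * indicator (X u) t)"
      using pV a0 by (intro sum_nonneg mult_nonneg_nonneg) auto
    have nn2: "0 \<le> (\<Sum>s\<in>S. (\<Sum>v\<in>{v\<in>V. \<gamma> v = s}. indicator (X v) t) / real (M s))"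
      by (intro sum_nonneg divide_nonneg_nonneg) auto
    show ?thesis
    proof (cases "0 \<le> t \<and> t < fin snk")
      case False then show ?thesis using nn1 nn2 unfolding F_def by simp
    next
      case True
      then obtain u where u: "u \<in> set p" "eligible E fin t u" "t < fin u" using cov by blast
      have uV: "u \<in> V" using u pV by auto
      define s where "s = \<gamma> u"
      have sS: "s \<in> S" using assms(3) uV s_def by auto
      define n where "n = (\<Sum>v\<in>{v\<in>V. \<gamma> v = s}. indicator (X v) t :: real)"
      have n_card: "n = real (card {v\<in>V. \<gamma> v = s \<and> exec t v})"
      proof -
        have "n = (\<Sum>v\<in>{v\<in>V. \<gamma> v = s}. of_bool (exec t v))" unfolding n_def X_def indicator_def by simp
        also have "\<dots> = real (card ({v\<in>V. \<gamma> v = s} \<inter> {v. exec t v}))" using finV by simp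
        also have "{v\<in>V. \<gamma> v = s} \<inter> {v. exec t v} = {v\<in>V. \<gamma> v = s \<and> exec t v}" by auto
        finally show ?thesis .
      qed
      have m1: "1 \<le> real (M s)" using Mpos[OF uV] s_def by simp
      have key: "1 \<le> a u * indicator (X u) t + n / real (M s)"
      proof (cases "card {v\<in>V. \<gamma> v = s \<and> exec t v} < M s")
        case True
        then have eu: "exec t u" using wc[OF uV _ u(2) u(3)] True s_def by (simp add: \<open>0 \<le> t \<and> t < fin snk\<close>)
        then have i1: "indicator (X u) t = (1::real)" by (simp add: X_def)
        have "u \<in> {v\<in>V. \<gamma> v = s \<and> exec t v}" using uV eu s_def by simp
        then have "card {v\<in>V. \<gamma> v = s \<and> exec t v} > 0" using finV by (auto simp: card_gt_0_iff)
        then have n1: "1 \<le> n" unfolding n_card by simp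
        have "1 = a u + 1 / real (M s)" unfolding a_def s_def by simp
        also have "\<dots> \<le> a u + n / real (M s)" using n1 m1 by (simp add: divide_right_mono)
        finally show ?thesis using i1 by simp
      next
        case False
        then have "real (M s) \<le> n" unfolding n_card by simp
        then have "1 \<le> n / real (M s)" using m1 by simp
        moreover have "0 \<le> a u * indicator (X u) t" using a0[OF uV] by simp
        ultimately show ?thesis by linarith
      qed
      have l1: "a u * indicator (X u) t \<le> (\<Sum>u\<in>set p. a u * indicator (X u) t)"
        using u(1) pV a0 by (intro member_le_sum) auto
      have l2: "n / real (M s) \<le> (\<Sum>s\<in>S. (\<Sum>v\<in>{v\<in>V. \<gamma> v = s}. indicator (X v) t) / real (M s))"
        unfolding n_def using sS assms(2) by (intro member_le_sum[where f = "\<lambda>s. (\<Sum>v\<in>{v\<in>V. \<gamma> v = s}. indicator (X v) t) / real (M s)"]) (auto intro!: sum_nonneg divide_nonneg_nonneg)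
      have "1 \<le> F t" unfolding F_def using key l1 l2 by linarith
      then show ?thesis using True by simp
    qed
  qed
  have "fin snk = integral\<^sup>L lborel (indicator {0..<fin snk} :: real \<Rightarrow> real)"
    using T0 by simp
  also have "\<dots> \<le> integral\<^sup>L lborel F"
  proof (rule integral_mono[OF _ Fint])
    show "integrable lborel (indicator {0..<fin snk} :: real \<Rightarrow> real)"
      using T0 by (intro integrable_real_indicator) (auto simp: emeasure_lborel_Ico)
  qed (use pw in auto)
  also have "\<dots> = (\<Sum>u\<in>set p. a u * measure lborel (X u)) +
      (\<Sum>s\<in>S. (\<Sum>v\<in>{v\<in>V. \<gamma> v = s}. measure lborel (X v)) / real (M s))"
  proof -
    have i1: "integrable lborel (\<lambda>t. \<Sum>u\<in>set p. a u * indicator (X u) t :: real)"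
      using pV Xint by (intro Bochner_Integration.integrable_sum integrable_mult_right) auto
    have i2: "integrable lborel (\<lambda>t. \<Sum>s\<in>S. (\<Sum>v\<in>{v\<in>V. \<gamma> v = s}. indicator (X v) t :: real) / real (M s))"
      using Xint by (intro Bochner_Integration.integrable_sum integrable_divide_zero) auto
    have e1: "integral\<^sup>L lborel (\<lambda>t. \<Sum>u\<in>set p. a u * indicator (X u) t :: real)
        = (\<Sum>u\<in>set p. a u * measure lborel (X u))"
      using pV Xint Xm by (subst Bochner_Integration.integral_sum) (auto intro!: sum.cong)
    have e2: "integral\<^sup>L lborel (\<lambda>t. \<Sum>s\<in>S. (\<Sum>v\<in>{v\<in>V. \<gamma> v = s}. indicator (X v) t :: real) / real (M s))
        = (\<Sum>s\<in>S. (\<Sum>v\<in>{v\<in>V. \<gamma> v = s}. measure lborel (X v)) / real (M s))"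
      using Xint Xm by (subst Bochner_Integration.integral_sum)
        (auto intro!: sum.cong integrable_divide_zero Bochner_Integration.integrable_sum simp: Bochner_Integration.integral_sum)
    show ?thesis unfolding F_def
      by (subst Bochner_Integration.integral_add[OF i1 i2]) (simp only: e1 e2)
  qed
  also have "\<dots> \<le> (\<Sum>u\<in>set p. a u * c u) +
      (\<Sum>s\<in>S. (\<Sum>v\<in>{v\<in>V. \<gamma> v = s}. c v) / real (M s))"
    using pV Xmeas a0
    by (intro add_mono sum_mono divide_right_mono mult_left_mono) auto
  also have "\<dots> \<le> graph_len V E (scaled_wcet \<gamma> c M) + (\<Sum>s\<in>S. vol V \<gamma> c s / real (M s))"
  proof -
    have "(\<Sum>u\<in>set p. a u * c u) = path_len (scaled_wcet \<gamma> c M) p"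
      unfolding path_len_def scaled_wcet_def a_def using path_distinct[OF p acyc]
      by (simp add: sum_list_distinct_conv_sum_set mult.commute)
    also have "\<dots> \<le> graph_len V E (scaled_wcet \<gamma> c M)"
      using path_le_graph_len[OF p acyc finV] a0 assms(4)
      unfolding scaled_wcet_def a_def by simp
    finally show ?thesis unfolding vol_def by simp
  qed
  finally show ?thesis .
qed


theorem theorem2:
  fixes V :: "'v set" and E :: "('v \<times> 'v) set" and src snk :: 'v
    and S :: "'s set" and \<gamma> :: "'v \<Rightarrow> 's" and c :: "'v \<Rightarrow> real" and M :: "'s \<Rightarrow> nat"
  assumes "typed_dag V E src snk"
    and "finite S" and "\<gamma> ` V \<subseteq> S"
    and "\<forall>v\<in>V. 0 \<le> c v"
    and "\<forall>s\<in>S. 1 \<le> M s"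
  shows "wcrt V E \<gamma> c M snk
           \<le> ereal (graph_len V E (scaled_wcet \<gamma> c M) + (\<Sum>s\<in>S. vol V \<gamma> c s / real (M s)))"
  unfolding wcrt_def
proof (rule SUP_least)
  fix ef assume "ef \<in> {(exec, fin). valid_execution V E \<gamma> c M exec fin}"
  then obtain exec fin where ef: "ef = (exec, fin)" and ve: "valid_execution V E \<gamma> c M exec fin" by auto
  show "ereal (snd ef snk) \<le> ereal (graph_len V E (scaled_wcet \<gamma> c M) + (\<Sum>s\<in>S. vol V \<gamma> c s / real (M s)))"
    using main_bound[OF assms ve] ef by simp
qed

end
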